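(* Let $X$ be an $L$-space with a convexifying operator $P$, $(T,r)$ a metric compact, $\mu$ a Borel measure on $T$, $\omega$ a modulus of continuity, and $Q\subset T$ a compact set with $\mu(Q)>0$. Then for all $t\in T$ and $f\in H^\omega(T,X)$, $$h_X\Big(P(f(t)),\tfrac{1}{\mu(Q)}\int_Q f(s)\,d\mu(s)\Big)\le\tfrac{1}{\mu(Q)}\int_Q\omega(r(t,s))\,d\mu(s).$$ If $X$ is isotropic and $X^{\rm c}\ne\{\theta\}$, then the inequality is sharp, i.e. for every $t\in T$ the supremum of the left-hand side over $f\in H^\omega(T,X)$ equals the right-hand side.
   Context: Semilinear space: a set $X$ with addition and multiplication by reals such that for all $x,y,z\in X$, $\alpha,\beta\in\mathbb R$: $x+y=y+x$; $x+(y+z)=(x+y)+z$; there is $\theta$ with $x+\theta=x$; $\alpha(x+y)=\alpha x+\alpha y$; $\alpha(\beta x)=(\alpha\beta)x$; $1\cdot x=x$, $0\cdot x=\theta$. $x$ is convex if $(\alpha+\beta)x=\alpha x+\beta x$ for all $\alpha,\beta\ge0$; $X^{\rm c}$ is the set of convex elements. An $L$-space is a semilinear space with a complete separable metric $h_X$ satisfying $h_X(\alpha x,\alpha y)=|\alpha|h_X(x,y)$ and $h_X(x+z,y+z)\le h_X(x,y)$; isotropic if the latter is always an equality. A convexifying operator is a surjective map $P\colon X\to X^{\rm c}$ with $h_X(P(x),P(y))\le h_X(x,y)$, $P\circ P=P$, $P(\alpha x+\beta y)=\alpha P(x)+\beta P(y)$ for all $x,y$, $\alpha,\beta\in\mathbb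 R$. Integral: $f\colon T\to X$ is measurable if $h_X(f(\cdot),x)$ is Borel measurable for each $x$; for a simple bounded $f$ taking the value $f_i$ on pairwise disjoint Borel sets $T_i$ covering $T$, $\int_T f\,d\mu=\sum_i P(f_i)\mu(T_i)$; for a bounded measurable $f$, $\int_Tf\,d\mu$ is the limit of the integrals of any uniformly bounded sequence of simple functions converging to $f$ $\mu$-a.e. (the limit exists and does not depend on the sequence); $\int_Q f\,d\mu=\int_T\chi_Qf\,d\mu$ with $\chi_Q$ the indicator of $Q$. A modulus of continuity is a non-decreasing continuous $\omega\colon[0,\infty)\to[0,\infty)$ with $\omega(0)=0$ and $\omega(a+b)\le\omega(a)+\omega(b)$; $H^\omega(T,X)=\{f\colon T\to X:\ h_X(f(s),f(t))\le\omega(r(s,t))\ \forall s,t\}$. *)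

theory Defs
  imports "HOL-Analysis.Analysis"
begin

definition semilinear_space ::
  "('a \<Rightarrow> 'a \<Rightarrow> 'a) \<Rightarrow> (real \<Rightarrow> 'a \<Rightarrow> 'a) \<Rightarrow> 'a \<Rightarrow> bool" where
  "semilinear_space add smul theta \<longleftrightarrow>
     (\<forall>x y. add x y = add y x) \<and>
     (\<forall>x y z. add x (add y z) = add (add x y) z) \<and>
     (\<forall>x. add x theta = x) \<and>
     (\<forall>a x y. smul a (add x y) = add (smul a x) (smul a y)) \<and>
     (\<forall>a b x. smul a (smul b x) = smul (a * b) x) \<and>
     (\<forall>x. smul 1 x = x) \<and>
     (\<forall>x. smul 0 x = theta)"

definition convex_elems ::
  "('a \<Rightarrow> 'a \<Rightarrow> 'a) \<Rightarrow> (real \<Rightarrow> 'a \<Rightarrow> 'a) \<Rightarrow> 'a set" where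
  "convex_elems add smul =
     {x. \<forall>a b. a \<ge> 0 \<longrightarrow> b \<ge> 0 \<longrightarrow> smul (a + b) x = add (smul a x) (smul b x)}"

definition is_metric :: "('a \<Rightarrow> 'a \<Rightarrow> real) \<Rightarrow> bool" where
  "is_metric h \<longleftrightarrow>
     (\<forall>x y. 0 \<le> h x y) \<and> (\<forall>x y. h x y = 0 \<longleftrightarrow> x = y) \<and>
     (\<forall>x y. h x y = h y x) \<and> (\<forall>x y z. h x z \<le> h x y + h y z)"

definition h_converges :: "('a \<Rightarrow> 'a \<Rightarrow> real) \<Rightarrow> (nat \<Rightarrow> 'a) \<Rightarrow> 'a \<Rightarrow> bool" where
  "h_converges h s l \<longleftrightarrow> (\<lambda>n. h (s n) l) \<longlonglongrightarrow> 0"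

definition h_complete :: "('a \<Rightarrow> 'a \<Rightarrow> real) \<Rightarrow> bool" where
  "h_complete h \<longleftrightarrow>
     (\<forall>s. (\<forall>e>0. \<exists>N. \<forall>m\<ge>N. \<forall>n\<ge>N. h (s m) (s n) < e) \<longrightarrow> (\<exists>l. h_converges h s l))"

definition h_separable :: "('a \<Rightarrow> 'a \<Rightarrow> real) \<Rightarrow> bool" where
  "h_separable h \<longleftrightarrow> (\<exists>D. countable D \<and> (\<forall>x. \<forall>e>0. \<exists>d\<in>D. h x d < e))"

definition L_space ::
  "('a \<Rightarrow> 'a \<Rightarrow> 'a) \<Rightarrow> (real \<Rightarrow> 'a \<Rightarrow> 'a) \<Rightarrow> 'a \<Rightarrow> ('a \<Rightarrow> 'a \<Rightarrow> real) \<Rightarrow> bool" where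
  "L_space add smul theta h \<longleftrightarrow>
     semilinear_space add smul theta \<and> is_metric h \<and> h_complete h \<and> h_separable h \<and>
     (\<forall>a x y. h (smul a x) (smul a y) = \<bar>a\<bar> * h x y) \<and>
     (\<forall>x y z. h (add x z) (add y z) \<le> h x y)"

definition isotropic :: "('a \<Rightarrow> 'a \<Rightarrow> 'a) \<Rightarrow> ('a \<Rightarrow> 'a \<Rightarrow> real) \<Rightarrow> bool" where
  "isotropic add h \<longleftrightarrow> (\<forall>x y z. h (add x z) (add y z) = h x y)"

definition convexifying_operator ::
  "('a \<Rightarrow> 'a \<Rightarrow> 'a) \<Rightarrow> (real \<Rightarrow> 'a \<Rightarrow> 'a) \<Rightarrow> ('a \<Rightarrow> 'a \<Rightarrow> real) \<Rightarrow> ('a \<Rightarrow> 'a) \<Rightarrow> bool" where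
  "convexifying_operator add smul h P \<longleftrightarrow>
     range P = convex_elems add smul \<and>
     (\<forall>x y. h (P x) (P y) \<le> h x y) \<and>
     (\<forall>x. P (P x) = P x) \<and>
     (\<forall>a b x y. P (add (smul a x) (smul b y)) = add (smul a (P x)) (smul b (P y)))"

definition X_measurable :: "('a \<Rightarrow> 'a \<Rightarrow> real) \<Rightarrow> 'b measure \<Rightarrow> ('b \<Rightarrow> 'a) \<Rightarrow> bool" where
  "X_measurable h M f \<longleftrightarrow> (\<forall>x. (\<lambda>t. h (f t) x) \<in> borel_measurable M)"

definition X_bounded :: "('a \<Rightarrow> 'a \<Rightarrow> real) \<Rightarrow> 'b set \<Rightarrow> ('b \<Rightarrow> 'a) \<Rightarrow> bool" where
  "X_bounded h S f \<longleftrightarrow> (\<exists>x0 C. \<forall>t\<in>S. h (f t) x0 \<le> C)"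

definition X_simple :: "'b measure \<Rightarrow> ('b \<Rightarrow> 'a) \<Rightarrow> bool" where
  "X_simple M f \<longleftrightarrow> finite (f ` space M) \<and> (\<forall>y. f -` {y} \<inter> space M \<in> sets M)"

definition simple_integral_X ::
  "('a \<Rightarrow> 'a \<Rightarrow> 'a) \<Rightarrow> (real \<Rightarrow> 'a \<Rightarrow> 'a) \<Rightarrow> 'a \<Rightarrow> ('a \<Rightarrow> 'a) \<Rightarrow> 'b measure \<Rightarrow> ('b \<Rightarrow> 'a) \<Rightarrow> 'a" where
  "simple_integral_X add smul theta P M f =
     Finite_Set.fold (\<lambda>y acc. add (smul (measure M (f -` {y} \<inter> space M)) (P y)) acc)
       theta (f ` space M)"

definition integral_X ::
  "('a \<Rightarrow> 'a \<Rightarrow> 'a) \<Rightarrow> (real \<Rightarrow> 'a \<Rightarrow> 'a) \<Rightarrow> 'a \<Rightarrow> ('a \<Rightarrow> 'a \<Rightarrow> real) \<Rightarrow> ('a \<Rightarrow> 'a)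
     \<Rightarrow> 'b measure \<Rightarrow> ('b \<Rightarrow> 'a) \<Rightarrow> 'a" where
  "integral_X add smul theta h P M f =
     (THE I. \<exists>s. (\<forall>n. X_simple M (s n)) \<and>
                (\<exists>x0 C. \<forall>n. \<forall>t\<in>space M. h (s n t) x0 \<le> C) \<and>
                (AE t in M. h_converges h (\<lambda>n. s n t) (f t)) \<and>
                h_converges h (\<lambda>n. simple_integral_X add smul theta P M (s n)) I)"

definition set_integral_X ::
  "('a \<Rightarrow> 'a \<Rightarrow> 'a) \<Rightarrow> (real \<Rightarrow> 'a \<Rightarrow> 'a) \<Rightarrow> 'a \<Rightarrow> ('a \<Rightarrow> 'a \<Rightarrow> real) \<Rightarrow> ('a \<Rightarrow> 'a)
     \<Rightarrow> 'b measure \<Rightarrow> 'b set \<Rightarrow> ('b \<Rightarrow> 'a) \<Rightarrow> 'a" where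
  "set_integral_X add smul theta h P M Q f =
     integral_X add smul theta h P M (\<lambda>s. if s \<in> Q then f s else theta)"

definition modulus_of_continuity :: "(real \<Rightarrow> real) \<Rightarrow> bool" where
  "modulus_of_continuity \<omega> \<longleftrightarrow>
     mono_on {0..} \<omega> \<and> continuous_on {0..} \<omega> \<and> \<omega> 0 = 0 \<and>
     (\<forall>a\<ge>0. \<omega> a \<ge> 0) \<and>
     (\<forall>a\<ge>0. \<forall>b\<ge>0. \<omega> (a + b) \<le> \<omega> a + \<omega> b)"

definition H_omega :: "(real \<Rightarrow> real) \<Rightarrow> ('a \<Rightarrow> 'a \<Rightarrow> real) \<Rightarrow> ('b::metric_space \<Rightarrow> 'a) set" where
  "H_omega \<omega> h = {f. \<forall>s t. h (f s) (f t) \<le> \<omega> (dist s t)}"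

end

theory Submission
  imports Defs
begin

locale Lsp =
  fixes add :: "'a \<Rightarrow> 'a \<Rightarrow> 'a" and smul :: "real \<Rightarrow> 'a \<Rightarrow> 'a" and theta :: 'a
    and h :: "'a \<Rightarrow> 'a \<Rightarrow> real" and P :: "'a \<Rightarrow> 'a"
  assumes LS: "L_space add smul theta h"
    and CP: "convexifying_operator add smul h P"
begin

lemma comm: "add x y = add y x" using LS unfolding L_space_def semilinear_space_def by blast
lemma assoc: "add x (add y z) = add (add x y) z" using LS unfolding L_space_def semilinear_space_def by blast
lemma zero_r: "add x theta = x" using LS unfolding L_space_def semilinear_space_def by blast
lemma zero_l: "add theta x = x" using comm zero_r by metis
lemma smul_add: "smul a (add x y) = add (smul a x) (smul a y)" using LS unfolding L_space_def semilinear_space_def by blast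
lemma smul_smul: "smul a (smul b x) = smul (a * b) x" using LS unfolding L_space_def semilinear_space_def by blast
lemma smul_one: "smul 1 x = x" using LS unfolding L_space_def semilinear_space_def by blast
lemma smul_zero: "smul 0 x = theta" using LS unfolding L_space_def semilinear_space_def by blast
lemma smul_theta: "smul a theta = theta" by (metis smul_smul smul_zero mult_zero_right)
lemma metric: "is_metric h" using LS by (simp add: L_space_def)
lemma h_nonneg_all: "\<forall>x y. 0 \<le> h x y" using metric unfolding is_metric_def by (elim conjE) assumption
lemma h_eq0_all: "\<forall>x y. h x y = 0 \<longleftrightarrow> x = y" using metric unfolding is_metric_def by (elim conjE) assumption
lemma h_sym_all: "\<forall>x y. h x y = h y x" using metric unfolding is_metric_def by (elim conjE) assumption
lemma h_tri_all: "\<forall>x y z. h x z \<le> h x y + h y z" using metric unfolding is_metric_def by (elim conjE) assumption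
lemma h_nonneg: "0 \<le> h x y" using h_nonneg_all by blast
lemma h_eq0: "h x y = 0 \<longleftrightarrow> x = y" using h_eq0_all by blast
lemma h_sym: "h x y = h y x" using h_sym_all by blast
lemma h_tri: "h x z \<le> h x y + h y z" using h_tri_all by blast
lemma h_refl: "h x x = 0" using h_eq0 by blast
lemma h_scale: "h (smul a x) (smul a y) = \<bar>a\<bar> * h x y" using LS unfolding L_space_def by blast
lemma h_addnx: "h (add x z) (add y z) \<le> h x y" using LS unfolding L_space_def by blast
lemma h_complete: "h_complete h" using LS unfolding L_space_def by blast

lemma h_add2: "h (add x z) (add y w) \<le> h x y + h z w"
proof -
  have "h (add x z) (add y w) \<le> h (add x z) (add y z) + h (add y z) (add y w)" by (rule h_tri)
  also have "h (add y z) (add y w) \<le> h z w" using h_addnx[of z y w] by (simp add: comm)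
  finally show ?thesis using h_addnx[of x z y] by linarith
qed

lemma P_lin: "P (add (smul a x) (smul b y)) = add (smul a (P x)) (smul b (P y))"
  using CP unfolding convexifying_operator_def by blast
lemma P_idem: "P (P x) = P x" using CP unfolding convexifying_operator_def by blast
lemma P_nonexp: "h (P x) (P y) \<le> h x y" using CP unfolding convexifying_operator_def by blast
lemma P_range: "range P = convex_elems add smul" using CP unfolding convexifying_operator_def by blast

lemma P_smul: "P (smul a x) = smul a (P x)"
  using P_lin[of a x 0 x] by (simp add: smul_zero zero_r)
lemma P_theta: "P theta = theta"
  using P_smul[of 0 theta] by (simp add: smul_zero)
lemma P_convex: "smul (a + b) (P x) = add (smul a (P x)) (smul b (P x))" if "a \<ge> 0" "b \<ge> 0"
proof -
  have "P x \<in> convex_elems add smul" using P_range by blast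
  thus ?thesis using that unfolding convex_elems_def by blast
qed
lemma convex_fix: "e \<in> convex_elems add smul \<Longrightarrow> P e = e"
  using P_range P_idem by (metis rangeE)

end

sublocale Lsp \<subseteq> XS: comm_monoid_set add theta
  by unfold_locales (auto simp: assoc[symmetric] comm zero_r, metis assoc comm)

context Lsp begin

lemma SI_eq: "simple_integral_X add smul theta P M f =
   XS.F (\<lambda>y. smul (measure M (f -` {y} \<inter> space M)) (P y)) (f ` space M)"
  by (simp add: simple_integral_X_def XS.eq_fold comp_def)

end


definition fsimp :: "('b::topological_space \<Rightarrow> 'c) \<Rightarrow> bool" where
  "fsimp g \<longleftrightarrow> finite (range g) \<and> (\<forall>y. g -` {y} \<in> sets borel)"

lemma fsimp_comp:
  assumes "fsimp g" shows "fsimp (\<lambda>t. k (g t))"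
proof -
  have fin: "finite (range g)" and m: "\<And>y. g -` {y} \<in> sets borel" using assms by (auto simp: fsimp_def)
  have "range (\<lambda>t. k (g t)) = k ` range g" by auto
  hence "finite (range (\<lambda>t. k (g t)))" using fin by simp
  moreover have "(\<lambda>t. k (g t)) -` {y} \<in> sets borel" for y
  proof -
    have "(\<lambda>t. k (g t)) -` {y} = (\<Union>x\<in>{x\<in>range g. k x = y}. g -` {x})" by auto
    also have "\<dots> \<in> sets borel" using fin m by (intro sets.finite_UN) auto
    finally show ?thesis .
  qed
  ultimately show ?thesis by (simp add: fsimp_def)
qed

lemma fsimp_pair:
  assumes "fsimp g1" "fsimp g2" shows "fsimp (\<lambda>t. (g1 t, g2 t))"
proof -
  have "range (\<lambda>t. (g1 t, g2 t)) \<subseteq> range g1 \<times> range g2" by auto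
  moreover have "finite (range g1 \<times> range g2)" using assms by (auto simp: fsimp_def)
  ultimately have "finite (range (\<lambda>t. (g1 t, g2 t)))" by (rule finite_subset)
  moreover have "(\<lambda>t. (g1 t, g2 t)) -` {y} \<in> sets borel" for y
  proof -
    have "(\<lambda>t. (g1 t, g2 t)) -` {y} = g1 -` {fst y} \<inter> g2 -` {snd y}" by (cases y) auto
    thus ?thesis using assms by (auto simp: fsimp_def)
  qed
  ultimately show ?thesis by (simp add: fsimp_def)
qed

lemma fsimp_set:
  assumes "A \<in> sets borel" shows "fsimp (\<lambda>t. t \<in> A)"
proof -
  have "(\<lambda>t. t \<in> A) -` {y} \<in> sets borel" for y
  proof (cases y)
    case True then show ?thesis using assms by (simp add: vimage_def)
  next
    case False
    have "(\<lambda>t. t \<in> A) -` {y} = space borel - A" using False by auto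
    then show ?thesis using assms by auto
  qed
  thus ?thesis by (simp add: fsimp_def)
qed

fun quant :: "real \<Rightarrow> 'b::metric_space list \<Rightarrow> 'b \<Rightarrow> 'b" where
  "quant d [] t = undefined"
| "quant d (c # cs) t = (if dist c t < d then c else quant d cs t)"

lemma quant_range: "range (quant d xs) \<subseteq> insert undefined (set xs)"
  by (induction xs) auto

lemma quant_meas: "quant d xs -` {y} \<in> sets borel"
proof (induction xs)
  case Nil
  then show ?case by (cases "y = undefined") (auto simp: vimage_def)
next
  case (Cons c cs)
  have "quant d (c # cs) -` {y} = (ball c d \<inter> {t. c = y}) \<union> ((space borel - ball c d) \<inter> quant d cs -` {y})"
    by (auto simp: ball_def)
  also have "\<dots> \<in> sets borel" using Cons by (cases "c = y") auto
  finally show ?case .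
qed

lemma quant_close: "t \<in> (\<Union>c\<in>set xs. ball c d) \<Longrightarrow> dist (quant d xs t) t < d"
  by (induction xs) (auto simp: ball_def)

lemma quantizer_exists:
  assumes "compact (UNIV :: 'b::metric_space set)" "d > 0"
  shows "\<exists>q :: 'b \<Rightarrow> 'b. fsimp q \<and> (\<forall>t. dist (q t) t < d)"
proof -
  have cv: "UNIV \<subseteq> (\<Union>c\<in>UNIV. ball c d)" using assms(2) by auto
  obtain C' :: "'b set" where "C' \<subseteq> UNIV" "finite C'" and cov: "UNIV \<subseteq> (\<Union>c\<in>C'. ball c d)"
    using compactE_image[OF assms(1) open_ball cv] by blast
  obtain xs where xs: "set xs = C'" using \<open>finite C'\<close> finite_list by blast
  have "fsimp (quant d xs)"
    unfolding fsimp_def using quant_range[of d xs] quant_meas[of d xs] by (auto intro: finite_subset)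
  moreover have "\<forall>t. dist (quant d xs t) t < d" using cov xs quant_close by blast
  ultimately show ?thesis by blast
qed

locale Lspm = Lsp add smul theta h P
  for add :: "'a \<Rightarrow> 'a \<Rightarrow> 'a" and smul :: "real \<Rightarrow> 'a \<Rightarrow> 'a" and theta :: 'a
    and h :: "'a \<Rightarrow> 'a \<Rightarrow> real" and P :: "'a \<Rightarrow> 'a" +
  fixes \<mu> :: "'b::metric_space measure"
  assumes mu_borel: "sets \<mu> = sets borel" and mu_fin: "finite_measure \<mu>"
begin

abbreviation SI where "SI s \<equiv> simple_integral_X add smul theta P \<mu> s"
abbreviation IX where "IX u \<equiv> integral_X add smul theta h P \<mu> u"

lemma space_mu: "space \<mu> = UNIV"
  using sets_eq_imp_space_eq[OF mu_borel] by simp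

lemma X_simple_iff: "X_simple \<mu> s \<longleftrightarrow> fsimp s"
  by (simp add: X_simple_def fsimp_def space_mu mu_borel)

lemma sets_mu: "A \<in> sets borel \<Longrightarrow> A \<in> sets \<mu>" using mu_borel by simp

lemma intR:
  fixes k :: "'c \<Rightarrow> real"
  assumes g: "fsimp g" and V: "finite V" "range g \<subseteq> V"
  shows "integrable \<mu> (\<lambda>t. k (g t))"
    and "integral\<^sup>L \<mu> (\<lambda>t. k (g t)) = (\<Sum>v\<in>V. measure \<mu> (g -` {v}) * k v)"
proof -
  have eq: "(\<lambda>t. k (g t)) = (\<lambda>t. \<Sum>v\<in>V. indicator (g -` {v}) t * k v)"
  proof
    fix t
    have "(\<Sum>v\<in>V. indicator (g -` {v}) t * k v) = (\<Sum>v\<in>V. if g t = v then k v else 0)"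
      by (intro sum.cong) (auto simp: indicator_def)
    also have "\<dots> = k (g t)" using V by (simp add: sum.delta[OF V(1)] subset_iff)
    finally show "k (g t) = (\<Sum>v\<in>V. indicator (g -` {v}) t * k v)" by simp
  qed
  have m: "g -` {v} \<in> sets \<mu>" for v using g by (auto simp: fsimp_def intro: sets_mu)
  have fin: "emeasure \<mu> (g -` {v}) < \<infinity>" for v
    using finite_measure.emeasure_finite[OF mu_fin] by (simp add: top.not_eq_extremum)
  show "integrable \<mu> (\<lambda>t. k (g t))" unfolding eq
    by (rule Bochner_Integration.integrable_sum) (use m fin in auto)
  show "integral\<^sup>L \<mu> (\<lambda>t. k (g t)) = (\<Sum>v\<in>V. measure \<mu> (g -` {v}) * k v)" unfolding eq
    using m fin by (subst Bochner_Integration.integral_sum) (auto simp: space_mu)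
qed

lemma smul_sum_convex:
  assumes "finite A" "\<forall>i\<in>A. c i \<ge> 0"
  shows "smul (\<Sum>i\<in>A. c i) (P x) = XS.F (\<lambda>i. smul (c i) (P x)) A"
  using assms
proof (induction A rule: finite_induct)
  case empty then show ?case by (simp add: smul_zero)
next
  case (insert a A)
  then show ?case by (simp add: P_convex sum_nonneg)
qed


lemma SI_refine:
  assumes g: "fsimp g" and V: "finite V" "range g \<subseteq> V"
  shows "SI (\<lambda>t. k (g t)) = XS.F (\<lambda>v. smul (measure \<mu> (g -` {v})) (P (k v))) V"
proof -
  define s where "s = (\<lambda>t. k (g t))"
  define w where "w = (\<lambda>y. smul (measure \<mu> (s -` {y})) (P y))"
  define H where "H = (\<lambda>v. smul (measure \<mu> (g -` {v})) (P (k v)))"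
  have m: "g -` {v} \<in> sets \<mu>" for v using g by (auto simp: fsimp_def intro: sets_mu)
  have "SI s = XS.F w (range s)" by (simp add: SI_eq space_mu w_def)
  also have "\<dots> = XS.F w (k ` V)"
  proof (rule XS.mono_neutral_left)
    show "finite (k ` V)" using V by simp
    show "range s \<subseteq> k ` V" using V by (auto simp: s_def)
    show "\<forall>i\<in>k ` V - range s. w i = theta"
    proof
      fix y assume "y \<in> k ` V - range s"
      hence "s -` {y} = {}" by blast
      thus "w y = theta" by (simp add: w_def smul_zero)
    qed
  qed
  also have "\<dots> = XS.F (\<lambda>y. XS.F H {v \<in> V. k v = y}) (k ` V)"
  proof (rule XS.cong)
    fix y assume "y \<in> k ` V"
    have "s -` {y} = (\<Union>v\<in>{v \<in> V. k v = y}. g -` {v})" using V by (auto simp: s_def)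
    hence "measure \<mu> (s -` {y}) = (\<Sum>v\<in>{v \<in> V. k v = y}. measure \<mu> (g -` {v}))"
      using V m by (simp add: finite_measure.finite_measure_finite_Union[OF mu_fin] disjoint_family_on_def,
          subst finite_measure.finite_measure_finite_Union[OF mu_fin]) (auto simp: disjoint_family_on_def)
    hence "w y = XS.F (\<lambda>v. smul (measure \<mu> (g -` {v})) (P y)) {v \<in> V. k v = y}"
      unfolding w_def using V by (simp add: smul_sum_convex)
    also have "\<dots> = XS.F H {v \<in> V. k v = y}" by (rule XS.cong) (auto simp: H_def)
    finally show "w y = XS.F H {v \<in> V. k v = y}" .
  qed simp
  also have "\<dots> = XS.F H V" using V by (intro XS.group) auto
  finally show ?thesis by (simp add: s_def H_def)
qed

lemma F_dist:
  assumes "finite A"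
  shows "h (XS.F u A) (XS.F v A) \<le> (\<Sum>i\<in>A. h (u i) (v i))"
  using assms
proof (induction A rule: finite_induct)
  case empty then show ?case by (simp add: h_refl)
next
  case (insert a A)
  then show ?case using h_add2[of "u a" "XS.F u A" "v a" "XS.F v A"] by simp
qed

lemma SI_lip:
  assumes s: "fsimp s" and s': "fsimp s'"
  shows "integrable \<mu> (\<lambda>t. h (s t) (s' t))"
    and "h (SI s) (SI s') \<le> integral\<^sup>L \<mu> (\<lambda>t. h (s t) (s' t))"
proof -
  define g where "g = (\<lambda>t. (s t, s' t))"
  define V where "V = range g"
  have g: "fsimp g" unfolding g_def using s s' by (rule fsimp_pair)
  have V: "finite V" "range g \<subseteq> V" using g by (auto simp: V_def fsimp_def)
  have e1: "s = (\<lambda>t. fst (g t))" and e2: "s' = (\<lambda>t. snd (g t))" by (auto simp: g_def)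
  have e3: "(\<lambda>t. h (s t) (s' t)) = (\<lambda>t. (\<lambda>v. h (fst v) (snd v)) (g t))" by (auto simp: g_def)
  show "integrable \<mu> (\<lambda>t. h (s t) (s' t))" unfolding e3 by (rule intR(1)[OF g V])
  have "h (SI s) (SI s') = h (XS.F (\<lambda>v. smul (measure \<mu> (g -` {v})) (P (fst v))) V)
                             (XS.F (\<lambda>v. smul (measure \<mu> (g -` {v})) (P (snd v))) V)"
    by (subst e1, subst e2, simp only: SI_refine[OF g V])
  also have "\<dots> \<le> (\<Sum>v\<in>V. h (smul (measure \<mu> (g -` {v})) (P (fst v))) (smul (measure \<mu> (g -` {v})) (P (snd v))))"
    by (rule F_dist[OF V(1)])
  also have "\<dots> \<le> (\<Sum>v\<in>V. measure \<mu> (g -` {v}) * h (fst v) (snd v))"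
    by (intro sum_mono) (simp add: h_scale mult_left_mono P_nonexp)
  also have "\<dots> = integral\<^sup>L \<mu> (\<lambda>t. h (s t) (s' t))" unfolding e3 by (rule intR(2)[OF g V, symmetric])
  finally show "h (SI s) (SI s') \<le> integral\<^sup>L \<mu> (\<lambda>t. h (s t) (s' t))" .
qed


lemma sep_lim:
  assumes s: "\<And>n. fsimp (s n)" and s': "\<And>n. fsimp (s' n)"
    and bd: "\<And>n t. h (s n t) x0 \<le> C" and bd': "\<And>n t. h (s' n t) x0' \<le> C'"
    and ae: "AE t in \<mu>. h_converges h (\<lambda>n. s n t) (u t)"
    and ae': "AE t in \<mu>. h_converges h (\<lambda>n. s' n t) (u t)"
  shows "(\<lambda>n. integral\<^sup>L \<mu> (\<lambda>t. h (s n t) (s' n t))) \<longlonglongrightarrow> 0"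
proof -
  have "(\<lambda>n. integral\<^sup>L \<mu> (\<lambda>t. h (s n t) (s' n t))) \<longlonglongrightarrow> integral\<^sup>L \<mu> (\<lambda>t. 0::real)"
  proof (rule integral_dominated_convergence[where w="\<lambda>t. C + h x0 x0' + C'"])
    show "(\<lambda>t. 0::real) \<in> borel_measurable \<mu>" by simp
    show "(\<lambda>t. h (s n t) (s' n t)) \<in> borel_measurable \<mu>" for n
      using SI_lip(1)[OF s s'] by (rule borel_measurable_integrable)
    show "integrable \<mu> (\<lambda>t. C + h x0 x0' + C')" by (rule finite_measure.integrable_const[OF mu_fin])
    show "AE t in \<mu>. (\<lambda>n. h (s n t) (s' n t)) \<longlonglongrightarrow> 0" using ae ae'
    proof eventually_elim
      case (elim t)
      have "(\<lambda>n. h (s n t) (u t) + h (s' n t) (u t)) \<longlonglongrightarrow> 0 + 0"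
        using elim by (intro tendsto_add) (auto simp: h_converges_def)
      hence lim0: "(\<lambda>n. h (s n t) (u t) + h (s' n t) (u t)) \<longlonglongrightarrow> 0" by simp
      have le: "h (s n t) (s' n t) \<le> h (s n t) (u t) + h (s' n t) (u t)" for n
        using h_tri[of "s n t" "s' n t" "u t"] h_sym[of "u t" "s' n t"] by linarith
      show ?case
      proof (rule tendsto_sandwich[where f="\<lambda>n. 0" and h="\<lambda>n. h (s n t) (u t) + h (s' n t) (u t)"])
        show "\<forall>\<^sub>F n in sequentially. 0 \<le> h (s n t) (s' n t)" by (intro always_eventually allI h_nonneg)
        show "\<forall>\<^sub>F n in sequentially. h (s n t) (s' n t) \<le> h (s n t) (u t) + h (s' n t) (u t)"
          by (intro always_eventually allI le)
      qed (rule tendsto_const, rule lim0)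
    qed
    show "AE t in \<mu>. norm (h (s n t) (s' n t)) \<le> C + h x0 x0' + C'" for n
    proof (rule AE_I2)
      fix t
      have "h (s n t) (s' n t) \<le> h (s n t) x0 + h x0 (s' n t)" by (rule h_tri)
      also have "h x0 (s' n t) \<le> h x0 x0' + h x0' (s' n t)" by (rule h_tri)
      finally have "h (s n t) (s' n t) \<le> C + h x0 x0' + C'"
        using bd[of n t] bd'[of n t] h_sym[of x0' "s' n t"] by linarith
      thus "norm (h (s n t) (s' n t)) \<le> C + h x0 x0' + C'"
        using h_nonneg[of "s n t" "s' n t"] by (simp add: abs_of_nonneg)
    qed
  qed
  thus ?thesis by simp
qed

lemma IX_eq:
  assumes sim: "\<forall>n. X_simple \<mu> (s n)" and bd: "\<exists>x0 C. \<forall>n. \<forall>t\<in>space \<mu>. h (s n t) x0 \<le> C"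
    and ae: "AE t in \<mu>. h_converges h (\<lambda>n. s n t) (u t)"
    and lim: "h_converges h (\<lambda>n. SI (s n)) I"
  shows "IX u = I"
  unfolding integral_X_def
proof (rule the_equality)
  show "\<exists>s. (\<forall>n. X_simple \<mu> (s n)) \<and> (\<exists>x0 C. \<forall>n. \<forall>t\<in>space \<mu>. h (s n t) x0 \<le> C) \<and>
        (AE t in \<mu>. h_converges h (\<lambda>n. s n t) (u t)) \<and> h_converges h (\<lambda>n. SI (s n)) I"
    using assms by blast
next
  fix I'
  assume "\<exists>s. (\<forall>n. X_simple \<mu> (s n)) \<and> (\<exists>x0 C. \<forall>n. \<forall>t\<in>space \<mu>. h (s n t) x0 \<le> C) \<and>
        (AE t in \<mu>. h_converges h (\<lambda>n. s n t) (u t)) \<and> h_converges h (\<lambda>n. SI (s n)) I'"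
  then obtain s' x0' C' where sim': "\<forall>n. X_simple \<mu> (s' n)" and bd': "\<forall>n. \<forall>t\<in>space \<mu>. h (s' n t) x0' \<le> C'"
    and ae': "AE t in \<mu>. h_converges h (\<lambda>n. s' n t) (u t)" and lim': "h_converges h (\<lambda>n. SI (s' n)) I'"
    by blast
  obtain x0 C where bd0: "\<forall>n. \<forall>t\<in>space \<mu>. h (s n t) x0 \<le> C" using bd by blast
  have fs: "\<And>n. fsimp (s n)" and fs': "\<And>n. fsimp (s' n)" using sim sim' by (auto simp: X_simple_iff)
  have L: "(\<lambda>n. integral\<^sup>L \<mu> (\<lambda>t. h (s' n t) (s n t))) \<longlonglongrightarrow> 0"
    by (rule sep_lim[OF fs' fs _ _ ae' ae]) (use bd0 bd' space_mu in auto)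
  have A: "(\<lambda>n. h (SI (s' n)) I' + integral\<^sup>L \<mu> (\<lambda>t. h (s' n t) (s n t)) + h (SI (s n)) I) \<longlonglongrightarrow> 0 + 0 + 0"
    using lim lim' L by (intro tendsto_add) (auto simp: h_converges_def)
  have "h I' I \<le> h (SI (s' n)) I' + integral\<^sup>L \<mu> (\<lambda>t. h (s' n t) (s n t)) + h (SI (s n)) I" for n
  proof -
    have a: "h I' I \<le> h I' (SI (s' n)) + h (SI (s' n)) I" by (rule h_tri)
    have b: "h (SI (s' n)) I \<le> h (SI (s' n)) (SI (s n)) + h (SI (s n)) I" by (rule h_tri)
    show ?thesis using a b SI_lip(2)[OF fs'[of n] fs[of n]] h_sym[of I' "SI (s' n)"] by linarith
  qed
  hence "h I' I \<le> 0" using A by (intro LIMSEQ_le_const[of _ 0]) auto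
  thus "I' = I" using h_nonneg[of I' I] h_eq0 by (meson antisym)
qed

end


locale Lspw = Lspm add smul theta h P \<mu>
  for add :: "'a \<Rightarrow> 'a \<Rightarrow> 'a" and smul :: "real \<Rightarrow> 'a \<Rightarrow> 'a" and theta :: 'a
    and h :: "'a \<Rightarrow> 'a \<Rightarrow> real" and P :: "'a \<Rightarrow> 'a" and \<mu> :: "'b::metric_space measure" +
  fixes \<omega> :: "real \<Rightarrow> real"
  assumes T: "compact (UNIV :: 'b set)" and om: "modulus_of_continuity \<omega>"
begin

lemma om_mono: "0 \<le> a \<Longrightarrow> a \<le> b \<Longrightarrow> \<omega> a \<le> \<omega> b"
  using om unfolding modulus_of_continuity_def mono_on_def by auto
lemma om_nonneg: "0 \<le> a \<Longrightarrow> 0 \<le> \<omega> a"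
  using om unfolding modulus_of_continuity_def by auto
lemma om0: "\<omega> 0 = 0"
  using om unfolding modulus_of_continuity_def by auto
lemma om_sub: "0 \<le> a \<Longrightarrow> 0 \<le> b \<Longrightarrow> \<omega> (a + b) \<le> \<omega> a + \<omega> b"
  using om unfolding modulus_of_continuity_def by auto
lemma om_cont: "continuous_on {0..} \<omega>"
  using om unfolding modulus_of_continuity_def by auto

lemma om_diff: assumes "0 \<le> a" "0 \<le> b" shows "\<bar>\<omega> a - \<omega> b\<bar> \<le> \<omega> \<bar>a - b\<bar>"
proof (cases "b \<le> a")
  case True
  have "\<omega> a = \<omega> (b + (a - b))" by simp
  also have "\<dots> \<le> \<omega> b + \<omega> (a - b)" using True assms by (intro om_sub) auto
  finally show ?thesis using om_mono[of b a] True assms by auto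
next
  case False
  have "\<omega> b = \<omega> (a + (b - a))" by simp
  also have "\<dots> \<le> \<omega> a + \<omega> (b - a)" using False assms by (intro om_sub) auto
  finally show ?thesis using om_mono[of a b] False assms by auto
qed

definition qs :: "nat \<Rightarrow> 'b \<Rightarrow> 'b" where
  "qs n = (SOME q. fsimp q \<and> (\<forall>t. dist (q t) t < 1 / real (Suc n)))"

lemma qs_props: "fsimp (qs n)" "dist (qs n t) t < 1 / real (Suc n)"
proof -
  have "\<exists>q :: 'b \<Rightarrow> 'b. fsimp q \<and> (\<forall>t. dist (q t) t < 1 / real (Suc n))"
    by (rule quantizer_exists[OF T]) simp
  hence "fsimp (qs n) \<and> (\<forall>t. dist (qs n t) t < 1 / real (Suc n))"
    unfolding qs_def by (rule someI_ex)
  thus "fsimp (qs n)" "dist (qs n t) t < 1 / real (Suc n)" by auto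
qed

definition eps :: "nat \<Rightarrow> real" where "eps n = \<omega> (1 / real (Suc n))"

lemma eps_nonneg: "0 \<le> eps n" unfolding eps_def by (intro om_nonneg) simp

lemma eps_lim: "eps \<longlonglongrightarrow> 0"
proof -
  have "(\<lambda>n. \<omega> (1 / real (Suc n))) \<longlonglongrightarrow> \<omega> 0"
    by (rule continuous_on_tendsto_compose[OF om_cont LIMSEQ_Suc[OF lim_1_over_n]]) auto
  thus ?thesis by (simp add: eps_def[abs_def] om0)
qed

lemma qs_om: "\<omega> (dist (qs n t) t) \<le> eps n"
  unfolding eps_def using qs_props(2)[of n t] by (intro om_mono) auto

lemma diamD: "\<exists>D. \<forall>x y :: 'b. dist x y \<le> D"
proof -
  obtain x e where xe: "\<forall>y::'b. dist x y \<le> e" using compact_imp_bounded[OF T] unfolding bounded_def by blast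
  have "dist a b \<le> 2 * e" for a b :: 'b
  proof -
    have "dist x a \<le> e" "dist x b \<le> e" using xe by auto
    thus "dist a b \<le> 2 * e" using dist_triangle2[of a b x] dist_commute[of a x] dist_commute[of b x] by linarith
  qed
  thus ?thesis by blast
qed

definition ap :: "('b \<Rightarrow> 'a) \<Rightarrow> 'b set \<Rightarrow> nat \<Rightarrow> 'b \<Rightarrow> 'a" where
  "ap u Q n = (\<lambda>t. if t \<in> Q then u (qs n t) else theta)"

definition Hom :: "('b \<Rightarrow> 'a) \<Rightarrow> bool" where
  "Hom u \<longleftrightarrow> (\<forall>s t. h (u s) (u t) \<le> \<omega> (dist s t))"

lemma ap_fsimp: assumes "Q \<in> sets borel" shows "fsimp (ap u Q n)"
proof -
  define k where "k = (\<lambda>(b, c). if b then u c else theta)"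
  define g where "g = (\<lambda>t. (t \<in> Q, qs n t))"
  have eq: "ap u Q n = (\<lambda>t. k (g t))" by (auto simp: ap_def k_def g_def)
  have "fsimp g" unfolding g_def by (rule fsimp_pair[OF fsimp_set[OF assms] qs_props(1)])
  thus ?thesis unfolding eq by (rule fsimp_comp)
qed

lemma ap_close: assumes "Hom u"
  shows "h (ap u Q n t) (if t \<in> Q then u t else theta) \<le> eps n"
proof (cases "t \<in> Q")
  case True
  have a: "h (u (qs n t)) (u t) \<le> \<omega> (dist (qs n t) t)" using assms by (simp add: Hom_def)
  have b: "h (ap u Q n t) (if t \<in> Q then u t else theta) = h (u (qs n t)) (u t)"
    using True by (simp add: ap_def)
  show ?thesis using a b qs_om[of n t] by linarith
next
  case False
  then show ?thesis by (simp add: ap_def h_refl eps_nonneg)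
qed

lemma ap_bd: assumes "Hom u" shows "\<exists>C. \<forall>n t. h (ap u Q n t) theta \<le> C"
proof -
  obtain D where D: "\<forall>x y :: 'b. dist x y \<le> D" using diamD by blast
  define t0 :: 'b where "t0 = undefined"
  have "h (ap u Q n t) theta \<le> \<omega> D + h (u t0) theta" for n t
  proof (cases "t \<in> Q")
    case True
    have "h (u (qs n t)) theta \<le> h (u (qs n t)) (u t0) + h (u t0) theta" by (rule h_tri)
    moreover have "h (u (qs n t)) (u t0) \<le> \<omega> (dist (qs n t) t0)" using assms by (simp add: Hom_def)
    moreover have "\<omega> (dist (qs n t) t0) \<le> \<omega> D" using D by (intro om_mono) auto
    ultimately show ?thesis using True by (simp add: ap_def)
  next
    case False
    have "0 \<le> D" using D[rule_format, of t0 t0] by simp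
    then show ?thesis using False om_nonneg[of D] h_nonneg[of "u t0" theta] by (simp add: ap_def h_refl)
  qed
  thus ?thesis by blast
qed

lemma ap_conv:
  assumes Q: "Q \<in> sets borel" and u: "Hom u"
  shows "h_converges h (\<lambda>n. SI (ap u Q n)) (IX (\<lambda>t. if t \<in> Q then u t else theta))"
proof -
  define uQ where "uQ = (\<lambda>t. if t \<in> Q then u t else theta)"
  define mT where "mT = measure \<mu> UNIV"
  have mT: "0 \<le> mT" by (simp add: mT_def)
  have fs: "fsimp (ap u Q n)" for n by (rule ap_fsimp[OF Q])
  have pt: "h (ap u Q m t) (ap u Q n t) \<le> eps m + eps n" for m n t
  proof -
    have "h (ap u Q m t) (ap u Q n t) \<le> h (ap u Q m t) (uQ t) + h (uQ t) (ap u Q n t)" by (rule h_tri)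
    thus ?thesis using ap_close[OF u, of Q m t] ap_close[OF u, of Q n t] h_sym[of "uQ t" "ap u Q n t"]
      by (simp add: uQ_def)
  qed
  have dm: "h (SI (ap u Q m)) (SI (ap u Q n)) \<le> mT * (eps m + eps n)" for m n
  proof -
    have "h (SI (ap u Q m)) (SI (ap u Q n)) \<le> integral\<^sup>L \<mu> (\<lambda>t. h (ap u Q m t) (ap u Q n t))"
      by (rule SI_lip(2)[OF fs fs])
    also have "\<dots> \<le> integral\<^sup>L \<mu> (\<lambda>t. eps m + eps n)"
      by (rule integral_mono[OF SI_lip(1)[OF fs fs] finite_measure.integrable_const[OF mu_fin] pt])
    also have "\<dots> = mT * (eps m + eps n)" by (simp add: mT_def space_mu)
    finally show ?thesis .
  qed
  have cauchy: "\<forall>e>0. \<exists>N. \<forall>m\<ge>N. \<forall>n\<ge>N. h (SI (ap u Q m)) (SI (ap u Q n)) < e"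
  proof (intro allI impI)
    fix e :: real assume e: "e > 0"
    have "e / (2 * (mT + 1)) > 0" using e mT by simp
    then obtain N where N: "\<forall>n\<ge>N. eps n < e / (2 * (mT + 1))"
      using order_tendstoD(2)[OF eps_lim] unfolding eventually_sequentially by blast
    have "h (SI (ap u Q m)) (SI (ap u Q n)) < e" if "m \<ge> N" "n \<ge> N" for m n
    proof -
      have em: "eps m < e / (2 * (mT + 1))" "eps n < e / (2 * (mT + 1))" using N that by auto
      have pos: "mT + 1 \<noteq> 0" using mT by linarith
      have hh: "e / (2 * (mT + 1)) = e / (mT + 1) / 2" by (simp add: mult.commute)
      have sumeq: "e / (2 * (mT + 1)) + e / (2 * (mT + 1)) = e / (mT + 1)" unfolding hh by (rule field_sum_of_halves)
      have "eps m + eps n < e / (2 * (mT + 1)) + e / (2 * (mT + 1))" using em by (rule add_strict_mono)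
      hence "eps m + eps n \<le> e / (mT + 1)" unfolding sumeq by (rule less_imp_le)
      hence "mT * (eps m + eps n) \<le> mT * (e / (mT + 1))" using mT by (rule mult_left_mono)
      also have "\<dots> < e" using mT e by (simp add: field_simps)
      finally show ?thesis using dm[of m n] by linarith
    qed
    thus "\<exists>N. \<forall>m\<ge>N. \<forall>n\<ge>N. h (SI (ap u Q m)) (SI (ap u Q n)) < e" by blast
  qed
  obtain l where l: "h_converges h (\<lambda>n. SI (ap u Q n)) l"
    using mp[OF spec[OF h_complete[unfolded h_complete_def], of "\<lambda>n. SI (ap u Q n)"] cauchy] by blast
  have "IX uQ = l"
  proof (rule IX_eq[OF _ _ _ l])
    show "\<forall>n. X_simple \<mu> (ap u Q n)" using fs by (simp add: X_simple_iff)
    show "\<exists>x0 C. \<forall>n. \<forall>t\<in>space \<mu>. h (ap u Q n t) x0 \<le> C" using ap_bd[OF u, of Q] by blast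
    show "AE t in \<mu>. h_converges h (\<lambda>n. ap u Q n t) (uQ t)"
    proof (rule AE_I2)
      fix t
      show "h_converges h (\<lambda>n. ap u Q n t) (uQ t)" unfolding h_converges_def
      proof (rule tendsto_sandwich[where f="\<lambda>n. 0" and h=eps, OF _ _ tendsto_const eps_lim])
        show "\<forall>\<^sub>F n in sequentially. 0 \<le> h (ap u Q n t) (uQ t)" by (intro always_eventually allI h_nonneg)
        show "\<forall>\<^sub>F n in sequentially. h (ap u Q n t) (uQ t) \<le> eps n"
          unfolding uQ_def by (intro always_eventually allI ap_close[OF u])
      qed
    qed
  qed
  thus ?thesis using l by (simp add: uQ_def)
qed


lemma Hom_H: "f \<in> H_omega \<omega> h \<Longrightarrow> Hom f"
  by (simp add: H_omega_def Hom_def)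

lemma om_dist_meas: "(\<lambda>s. \<omega> (dist t s)) \<in> borel_measurable \<mu>"
proof -
  have "continuous_on UNIV (\<lambda>s. \<omega> (dist t s))"
    by (rule continuous_on_compose2[OF om_cont]) (auto intro!: continuous_intros)
  hence "(\<lambda>s. \<omega> (dist t s)) \<in> borel_measurable borel" by (rule borel_measurable_continuous_onI)
  thus ?thesis by (subst measurable_cong_sets[OF mu_borel refl])
qed

lemma wfun_int:
  assumes Qb: "Q \<in> sets borel"
  shows "integrable \<mu> (\<lambda>s. indicator Q s * \<omega> (dist t s))"
proof -
  obtain D where D: "\<forall>x y :: 'b. dist x y \<le> D" using diamD by blast
  have mm: "(\<lambda>s. indicator Q s * \<omega> (dist t s)) \<in> borel_measurable \<mu>"
    by (intro borel_measurable_times borel_measurable_indicator om_dist_meas sets_mu Qb)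
  have ae: "AE s in \<mu>. norm (indicator Q s * \<omega> (dist t s)) \<le> \<omega> D"
  proof (rule AE_I2)
    fix s
    have "0 \<le> \<omega> (dist t s)" "\<omega> (dist t s) \<le> \<omega> D" using D by (auto intro: om_nonneg om_mono)
    thus "norm (indicator Q s * \<omega> (dist t s)) \<le> \<omega> D" by (auto simp: indicator_def)
  qed
  show ?thesis by (rule finite_measure.integrable_const_bound[OF mu_fin ae mm])
qed

lemma part1:
  assumes Qc: "compact Q" and muQ: "measure \<mu> Q > 0" and f: "f \<in> H_omega \<omega> h"
  shows "h (P (f t)) (smul (1 / measure \<mu> Q) (set_integral_X add smul theta h P \<mu> Q f))
              \<le> (1 / measure \<mu> Q) * (LINT s:Q|\<mu>. \<omega> (dist t s))"
proof -
  have Qb: "Q \<in> sets borel" using Qc by (rule borel_compact)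
  have u: "Hom f" using f by (rule Hom_H)
  define I where "I = set_integral_X add smul theta h P \<mu> Q f"
  have conv: "h_converges h (\<lambda>n. SI (ap f Q n)) I"
    using ap_conv[OF Qb u] by (simp add: I_def set_integral_X_def)
  define wf where "wf = (\<lambda>s. indicator Q s * \<omega> (dist t s))"
  define J where "J = integral\<^sup>L \<mu> wf"
  have J: "(LINT s:Q|\<mu>. \<omega> (dist t s)) = J" by (simp add: J_def wf_def set_lebesgue_integral_def)
  have wfi: "integrable \<mu> wf" unfolding wf_def by (rule wfun_int[OF Qb])
  define mT where "mT = measure \<mu> UNIV"
  define kk where "kk = (\<lambda>b. if b then f t else theta)"
  define g where "g = (\<lambda>s. kk (s \<in> Q))"
  have gs: "fsimp g" unfolding g_def by (rule fsimp_comp[OF fsimp_set[OF Qb]])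
  have SIg: "SI g = smul (measure \<mu> Q) (P (f t))"
  proof -
    have "SI g = XS.F (\<lambda>b. smul (measure \<mu> ((\<lambda>s. s \<in> Q) -` {b})) (P (kk b))) UNIV"
      unfolding g_def by (rule SI_refine[OF fsimp_set[OF Qb]]) auto
    also have "\<dots> = XS.F (\<lambda>b. smul (measure \<mu> ((\<lambda>s. s \<in> Q) -` {b})) (P (kk b))) {True, False}"
      by (simp add: UNIV_bool comm)
    also have "\<dots> = smul (measure \<mu> Q) (P (f t))"
      by (simp add: kk_def P_theta smul_theta zero_r vimage_def)
    finally show ?thesis .
  qed
  have fs: "fsimp (ap f Q n)" for n by (rule ap_fsimp[OF Qb])
  have bnd: "h (SI g) (SI (ap f Q n)) \<le> J + mT * eps n" for n
  proof -
    have pt: "h (g s) (ap f Q n s) \<le> wf s + eps n" for s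
    proof (cases "s \<in> Q")
      case True
      have "h (f t) (f (qs n s)) \<le> h (f t) (f s) + h (f s) (f (qs n s))" by (rule h_tri)
      moreover have "h (f t) (f s) \<le> \<omega> (dist t s)" using u by (simp add: Hom_def)
      moreover have "h (f s) (f (qs n s)) \<le> \<omega> (dist s (qs n s))" using u by (simp add: Hom_def)
      moreover have "\<omega> (dist s (qs n s)) \<le> eps n" using qs_om[of n s] by (simp add: dist_commute)
      ultimately show ?thesis using True by (simp add: g_def kk_def ap_def wf_def)
    next
      case False
      then show ?thesis by (simp add: g_def kk_def ap_def wf_def h_refl eps_nonneg)
    qed
    have "h (SI g) (SI (ap f Q n)) \<le> integral\<^sup>L \<mu> (\<lambda>s. h (g s) (ap f Q n s))"
      by (rule SI_lip(2)[OF gs fs])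
    also have "\<dots> \<le> integral\<^sup>L \<mu> (\<lambda>s. wf s + eps n)"
      by (rule integral_mono[OF SI_lip(1)[OF gs fs] _ pt])
         (rule Bochner_Integration.integrable_add[OF wfi finite_measure.integrable_const[OF mu_fin]])
    also have "\<dots> = J + mT * eps n"
      using wfi finite_measure.integrable_const[OF mu_fin]
      by (subst Bochner_Integration.integral_add[OF wfi finite_measure.integrable_const[OF mu_fin]]) (simp add: J_def mT_def space_mu)
    finally show ?thesis .
  qed
  have lim0: "(\<lambda>n. J + mT * eps n + h (SI (ap f Q n)) I) \<longlonglongrightarrow> J + mT * 0 + 0"
    using conv eps_lim by (intro tendsto_intros) (auto simp: h_converges_def)
  hence lim: "(\<lambda>n. J + mT * eps n + h (SI (ap f Q n)) I) \<longlonglongrightarrow> J" by simp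
  have le: "h (SI g) I \<le> J + mT * eps n + h (SI (ap f Q n)) I" for n
    using h_tri[of "SI g" I "SI (ap f Q n)"] bnd[of n] by linarith
  have hI: "h (SI g) I \<le> J" by (rule LIMSEQ_le_const[OF lim]) (use le in blast)
  define c where "c = 1 / measure \<mu> Q"
  have c: "c > 0" "c * measure \<mu> Q = 1" using muQ by (auto simp: c_def)
  have "P (f t) = smul c (SI g)" by (simp add: SIg smul_smul c smul_one)
  hence "h (P (f t)) (smul c I) = c * h (SI g) I" using c by (simp add: h_scale)
  also have "\<dots> \<le> c * J" using hI c by simp
  finally show ?thesis by (simp add: J c_def I_def)
qed


lemma smul_conv_dist:
  assumes e: "e \<in> convex_elems add smul" and ab: "0 \<le> a" "0 \<le> b"
  shows "h (smul a e) (smul b e) \<le> \<bar>a - b\<bar> * h e theta"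
proof -
  have key: "h (smul x e) (smul y e) \<le> (x - y) * h e theta" if "0 \<le> y" "y \<le> x" for x y
  proof -
    have cv: "\<forall>a b. a \<ge> 0 \<longrightarrow> b \<ge> 0 \<longrightarrow> smul (a + b) e = add (smul a e) (smul b e)"
      using e by (simp add: convex_elems_def)
    have "smul (y + (x - y)) e = add (smul y e) (smul (x - y) e)" using cv[rule_format, of y "x - y"] that by simp
    hence e1: "add (smul (x - y) e) (smul y e) = smul x e" by (simp add: comm)
    have "h (add (smul (x - y) e) (smul y e)) (add theta (smul y e)) \<le> h (smul (x - y) e) theta"
      by (rule h_addnx)
    hence "h (smul x e) (smul y e) \<le> h (smul (x - y) e) theta" by (simp only: e1 zero_l)
    also have "\<dots> = h (smul (x - y) e) (smul (x - y) theta)" by (simp add: smul_theta)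
    also have "\<dots> = (x - y) * h e theta" using that by (simp add: h_scale)
    finally show ?thesis .
  qed
  show ?thesis
  proof (cases "b \<le> a")
    case True then show ?thesis using key[of b a] ab by simp
  next
    case False then show ?thesis using key[of a b] ab h_sym[of "smul a e" "smul b e"] by simp
  qed
qed

lemma part2:
  assumes Qc: "compact Q" and muQ: "measure \<mu> Q > 0"
    and e: "e \<in> convex_elems add smul" "e \<noteq> theta"
  shows "\<exists>f\<in>H_omega \<omega> h. h (P (f t)) (smul (1 / measure \<mu> Q) (set_integral_X add smul theta h P \<mu> Q f))
              = (1 / measure \<mu> Q) * (LINT s:Q|\<mu>. \<omega> (dist t s))"
proof -
  have Qb: "Q \<in> sets borel" using Qc by (rule borel_compact)
  define d where "d = h e theta"
  have d: "d > 0" using e(2) h_nonneg[of e theta] h_eq0[of e theta] by (auto simp: d_def)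
  have Pe: "P e = e" using e(1) by (rule convex_fix)
  define f0 where "f0 = (\<lambda>s. smul (\<omega> (dist t s) / d) e)"
  have f0H: "f0 \<in> H_omega \<omega> h" unfolding H_omega_def
  proof (intro CollectI allI)
    fix s s'
    have "h (f0 s) (f0 s') \<le> \<bar>\<omega> (dist t s) / d - \<omega> (dist t s') / d\<bar> * d"
      unfolding f0_def d_def using d by (intro smul_conv_dist[OF e(1)]) (auto intro!: divide_nonneg_nonneg om_nonneg simp: d_def)
    also have "\<dots> = \<bar>\<omega> (dist t s) - \<omega> (dist t s')\<bar>" using d by (simp add: field_simps abs_div)
    also have "\<dots> \<le> \<omega> \<bar>dist t s - dist t s'\<bar>" by (rule om_diff) auto
    also have "\<dots> \<le> \<omega> (dist s s')"
      using abs_dist_diff_le[of s t s'] by (intro om_mono) (auto simp: dist_commute)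
    finally show "h (f0 s) (f0 s') \<le> \<omega> (dist s s')" .
  qed
  have u: "Hom f0" using f0H by (rule Hom_H)
  define I where "I = set_integral_X add smul theta h P \<mu> Q f0"
  have conv: "h_converges h (\<lambda>n. SI (ap f0 Q n)) I"
    using ap_conv[OF Qb u] by (simp add: I_def set_integral_X_def)
  define wf where "wf = (\<lambda>s. indicator Q s * \<omega> (dist t s))"
  define J where "J = integral\<^sup>L \<mu> wf"
  have J: "(LINT s:Q|\<mu>. \<omega> (dist t s)) = J" by (simp add: J_def wf_def set_lebesgue_integral_def)
  have wfi: "integrable \<mu> wf" unfolding wf_def by (rule wfun_int[OF Qb])
  have J0: "0 \<le> J" unfolding J_def wf_def by (intro integral_nonneg_AE AE_I2) (auto simp: indicator_def intro: om_nonneg)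
  define mT where "mT = measure \<mu> UNIV"
  define psi where "psi = (\<lambda>n s. if s \<in> Q then \<omega> (dist t (qs n s)) / d else 0)"
  have SIap: "SI (ap f0 Q n) = smul (integral\<^sup>L \<mu> (psi n)) e" and psii: "integrable \<mu> (psi n)" for n
  proof -
    define kr where "kr = (\<lambda>(b, c). if b then \<omega> (dist t c) / d else 0)"
    define k where "k = (\<lambda>v. smul (kr v) e)"
    define g where "g = (\<lambda>s. (s \<in> Q, qs n s))"
    define V where "V = range g"
    have gs: "fsimp g" unfolding g_def by (rule fsimp_pair[OF fsimp_set[OF Qb] qs_props(1)])
    have V: "finite V" "range g \<subseteq> V" using gs by (auto simp: V_def fsimp_def)
    have kr0: "0 \<le> kr v" for v using d by (auto simp: kr_def intro!: divide_nonneg_nonneg om_nonneg split: prod.splits)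
    have eq: "ap f0 Q n = (\<lambda>s. k (g s))"
      by (auto simp: ap_def f0_def k_def kr_def g_def smul_zero)
    have eqp: "psi n = (\<lambda>s. kr (g s))" by (auto simp: psi_def kr_def g_def)
    show "integrable \<mu> (psi n)" unfolding eqp by (rule intR(1)[OF gs V])
    have "SI (ap f0 Q n) = XS.F (\<lambda>v. smul (measure \<mu> (g -` {v})) (P (k v))) V"
      unfolding eq by (rule SI_refine[OF gs V])
    also have "\<dots> = XS.F (\<lambda>v. smul (measure \<mu> (g -` {v}) * kr v) (P e)) V"
      by (rule XS.cong) (auto simp: k_def P_smul Pe smul_smul)
    also have "\<dots> = smul (\<Sum>v\<in>V. measure \<mu> (g -` {v}) * kr v) (P e)"
      using V kr0 by (subst smul_sum_convex) auto
    also have "\<dots> = smul (integral\<^sup>L \<mu> (psi n)) e"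
      unfolding eqp intR(2)[OF gs V] Pe ..
    finally show "SI (ap f0 Q n) = smul (integral\<^sup>L \<mu> (psi n)) e" .
  qed
  have psib: "integral\<^sup>L \<mu> (psi n) - J / d \<le> mT * (eps n / d) \<and> J / d - integral\<^sup>L \<mu> (psi n) \<le> mT * (eps n / d)" for n
  proof -
    have pt1: "psi n s \<le> wf s / d + eps n / d" and pt2: "wf s / d \<le> psi n s + eps n / d" for s
    proof -
      have "\<bar>\<omega> (dist t (qs n s)) - \<omega> (dist t s)\<bar> \<le> \<omega> \<bar>dist t (qs n s) - dist t s\<bar>"
        by (rule om_diff) auto
      also have "\<dots> \<le> \<omega> (dist (qs n s) s)"
        using abs_dist_diff_le[of "qs n s" t s] by (intro om_mono) (auto simp: dist_commute)
      also have "\<dots> \<le> eps n" by (rule qs_om)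
      finally have "\<bar>\<omega> (dist t (qs n s)) - \<omega> (dist t s)\<bar> \<le> eps n" .
      hence a: "\<bar>\<omega> (dist t (qs n s)) / d - \<omega> (dist t s) / d\<bar> \<le> eps n / d"
        using d by (simp add: field_simps abs_div divide_right_mono flip: diff_divide_distrib)
      show "psi n s \<le> wf s / d + eps n / d" "wf s / d \<le> psi n s + eps n / d"
        using a eps_nonneg[of n] d by (auto simp: psi_def wf_def)
    qed
    have i1: "integral\<^sup>L \<mu> (psi n) \<le> integral\<^sup>L \<mu> (\<lambda>s. wf s / d + eps n / d)"
      by (rule integral_mono[OF psii Bochner_Integration.integrable_add[OF integrable_divide_zero[OF wfi] finite_measure.integrable_const[OF mu_fin]] pt1])
    have i2: "integral\<^sup>L \<mu> (\<lambda>s. wf s / d) \<le> integral\<^sup>L \<mu> (\<lambda>s. psi n s + eps n / d)"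
      by (rule integral_mono[OF integrable_divide_zero[OF wfi] Bochner_Integration.integrable_add[OF psii finite_measure.integrable_const[OF mu_fin]] pt2])
    have e1: "integral\<^sup>L \<mu> (\<lambda>s. wf s / d + eps n / d) = J / d + mT * (eps n / d)"
      using wfi finite_measure.integrable_const[OF mu_fin]
      by (subst Bochner_Integration.integral_add[OF integrable_divide_zero[OF wfi] finite_measure.integrable_const[OF mu_fin]]) (simp add: J_def mT_def space_mu)
    have e2: "integral\<^sup>L \<mu> (\<lambda>s. psi n s + eps n / d) = integral\<^sup>L \<mu> (psi n) + mT * (eps n / d)"
      using psii finite_measure.integrable_const[OF mu_fin]
      by (subst Bochner_Integration.integral_add[OF psii finite_measure.integrable_const[OF mu_fin]]) (simp add: mT_def space_mu)
    have e3: "integral\<^sup>L \<mu> (\<lambda>s. wf s / d) = J / d" by (simp add: J_def)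
    have ar: "\<And>A B C :: real. A \<le> B + C \<Longrightarrow> B \<le> A + C \<Longrightarrow> A - B \<le> C \<and> B - A \<le> C" by linarith
    have a1: "integral\<^sup>L \<mu> (psi n) \<le> J / d + mT * (eps n / d)" using i1 unfolding e1 .
    have a2: "J / d \<le> integral\<^sup>L \<mu> (psi n) + mT * (eps n / d)" using i2 unfolding e2 e3 .
    show ?thesis by (rule ar[OF a1 a2])
  qed
  have near: "h (SI (ap f0 Q n)) (smul (J / d) e) \<le> mT * eps n" for n
  proof -
    have psi0: "0 \<le> integral\<^sup>L \<mu> (psi n)"
      unfolding psi_def using d by (intro integral_nonneg_AE AE_I2) (auto intro!: divide_nonneg_nonneg om_nonneg)
    have "h (SI (ap f0 Q n)) (smul (J / d) e) \<le> \<bar>integral\<^sup>L \<mu> (psi n) - J / d\<bar> * d"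
      unfolding SIap d_def using psi0 J0 d by (intro smul_conv_dist[OF e(1)]) (auto simp: d_def)
    also have "\<dots> \<le> (mT * (eps n / d)) * d" using psib[of n] d by (intro mult_right_mono) auto
    also have "\<dots> = mT * eps n" using d by simp
    finally show ?thesis .
  qed
  have lim0: "(\<lambda>n. h (SI (ap f0 Q n)) I + mT * eps n) \<longlonglongrightarrow> 0 + mT * 0"
    using conv eps_lim by (intro tendsto_intros) (auto simp: h_converges_def)
  hence lim: "(\<lambda>n. h (SI (ap f0 Q n)) I + mT * eps n) \<longlonglongrightarrow> 0" by simp
  have le: "h I (smul (J / d) e) \<le> h (SI (ap f0 Q n)) I + mT * eps n" for n
    using h_tri[of I "smul (J / d) e" "SI (ap f0 Q n)"] near[of n] h_sym[of I "SI (ap f0 Q n)"] by linarith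
  have "h I (smul (J / d) e) \<le> 0" by (rule LIMSEQ_le_const[OF lim]) (use le in blast)
  hence Ieq: "I = smul (J / d) e" using h_nonneg[of I "smul (J / d) e"] h_eq0 by (meson antisym)
  define c where "c = 1 / measure \<mu> Q"
  have c: "c > 0" using muQ by (auto simp: c_def)
  have f0t: "P (f0 t) = theta" by (simp add: f0_def om0 smul_zero P_theta)
  have "h (P (f0 t)) (smul c I) = h (smul (c * (J / d)) theta) (smul (c * (J / d)) e)"
    by (simp add: f0t Ieq smul_smul smul_theta)
  also have "\<dots> = c * (J / d) * d" using c J0 d by (simp add: h_scale h_sym[of theta e] d_def)
  also have "\<dots> = c * J" using d by simp
  finally have "h (P (f0 t)) (smul c I) = c * J" .
  thus ?thesis using f0H by (auto simp: c_def I_def J)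
qed

end

theorem corollary1:
  fixes add :: "'a \<Rightarrow> 'a \<Rightarrow> 'a" and smul :: "real \<Rightarrow> 'a \<Rightarrow> 'a" and theta :: 'a
    and h :: "'a \<Rightarrow> 'a \<Rightarrow> real" and P :: "'a \<Rightarrow> 'a"
    and \<mu> :: "'b::metric_space measure" and \<omega> :: "real \<Rightarrow> real" and Q :: "'b set"
  assumes X: "L_space add smul theta h"
    and P: "convexifying_operator add smul h P"
    and T: "compact (UNIV :: 'b set)"
    and mu_borel: "sets \<mu> = sets borel"
    and mu_fin: "finite_measure \<mu>"
    and om: "modulus_of_continuity \<omega>"
    and Q: "compact Q" and muQ: "measure \<mu> Q > 0"
  shows "(\<forall>t. \<forall>f\<in>H_omega \<omega> h.
            h (P (f t)) (smul (1 / measure \<mu> Q) (set_integral_X add smul theta h P \<mu> Q f))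
              \<le> (1 / measure \<mu> Q) * (LINT s:Q|\<mu>. \<omega> (dist t s)))
       \<and> (isotropic add h \<and> convex_elems add smul \<noteq> {theta} \<longrightarrow>
           (\<forall>t. (SUP f\<in>H_omega \<omega> h.
                   h (P (f t)) (smul (1 / measure \<mu> Q) (set_integral_X add smul theta h P \<mu> Q f)))
                 = (1 / measure \<mu> Q) * (LINT s:Q|\<mu>. \<omega> (dist t s))))"
proof -
  interpret W: Lspw add smul theta h P \<mu> \<omega>
    by (intro Lspw.intro Lspm.intro Lsp.intro Lspm_axioms.intro Lspw_axioms.intro X P mu_borel mu_fin T om)
  have p1: "\<forall>t. \<forall>f\<in>H_omega \<omega> h.
            h (P (f t)) (smul (1 / measure \<mu> Q) (set_integral_X add smul theta h P \<mu> Q f))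
              \<le> (1 / measure \<mu> Q) * (LINT s:Q|\<mu>. \<omega> (dist t s))"
    using W.part1[OF Q muQ] by blast
  have p2: "(\<forall>t. (SUP f\<in>H_omega \<omega> h.
                   h (P (f t)) (smul (1 / measure \<mu> Q) (set_integral_X add smul theta h P \<mu> Q f)))
                 = (1 / measure \<mu> Q) * (LINT s:Q|\<mu>. \<omega> (dist t s)))"
    if cv: "convex_elems add smul \<noteq> {theta}"
  proof
    fix t
    have "theta \<in> convex_elems add smul" using W.P_range W.P_theta by (metis rangeI)
    then obtain e where e: "e \<in> convex_elems add smul" "e \<noteq> theta" using cv by blast
    obtain f0 where f0: "f0 \<in> H_omega \<omega> h"
      and eq: "h (P (f0 t)) (smul (1 / measure \<mu> Q) (set_integral_X add smul theta h P \<mu> Q f0))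
              = (1 / measure \<mu> Q) * (LINT s:Q|\<mu>. \<omega> (dist t s))"
      using W.part2[OF Q muQ e, of t] by blast
    show "(SUP f\<in>H_omega \<omega> h.
                   h (P (f t)) (smul (1 / measure \<mu> Q) (set_integral_X add smul theta h P \<mu> Q f)))
                 = (1 / measure \<mu> Q) * (LINT s:Q|\<mu>. \<omega> (dist t s))"
    proof (rule cSup_eq_maximum)
      show "(1 / measure \<mu> Q) * (LINT s:Q|\<mu>. \<omega> (dist t s)) \<in> (\<lambda>f. h (P (f t)) (smul (1 / measure \<mu> Q) (set_integral_X add smul theta h P \<mu> Q f))) ` H_omega \<omega> h"
        by (rule rev_image_eqI[OF f0]) (simp only: eq)
    next
      fix x assume "x \<in> (\<lambda>f. h (P (f t)) (smul (1 / measure \<mu> Q) (set_integral_X add smul theta h P \<mu> Q f))) ` H_omega \<omega> h"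
      then obtain f where "f \<in> H_omega \<omega> h" and "x = h (P (f t)) (smul (1 / measure \<mu> Q) (set_integral_X add smul theta h P \<mu> Q f))"
        by blast
      thus "x \<le> (1 / measure \<mu> Q) * (LINT s:Q|\<mu>. \<omega> (dist t s))" using p1 by blast
    qed
  qed
  show ?thesis using p1 p2 by blast
qed

end
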